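(* Let $\tilde h_n(q)=q^{n(n-1)/2}h_n(q^{-1})$ for $n\ge 0$ and $\tilde h(q,s)=\sum_{n\ge0}\tilde h_n(q)s^n$. Then, as formal power series in $s$, $$\tilde h(q,s)=\cfrac{1}{1-\gamma_0 s-\cfrac{\lambda_0 s^2}{1-\gamma_1 s-\cfrac{\lambda_1 s^2}{1-\gamma_2 s-\cdots}}},\qquad \gamma_m=\binom{m+1}{1}_{\!q}^{2},\quad \lambda_m=q\binom{m+2}{2}_{\!q}^{2}\ (m\ge0),$$ i.e. $$\tilde h(q,s)=\cfrac{1}{1-s-\cfrac{qs^2}{1-\binom{2}{1}_q^2 s-\cfrac{q\binom{3}{2}_q^2s^2}{1-\binom{3}{1}_q^2s-\cfrac{q\binom{4}{2}_q^2s^2}{1-\binom{4}{1}_q^2 s-\cdots}}}}.$$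
   Context: Gaussian binomial coefficients: for $m\ge k\ge 0$, $\binom{m}{k}_q=\frac{[m]_q!}{[k]_q!\,[m-k]_q!}$ with $[m]_q!=\prod_{i=1}^m\frac{1-q^i}{1-q}$; set $\binom{m}{k}_q=0$ if $k>m$ or $k<0$. Let $W$ be an $n$-dimensional complex vector space with basis $w_1,\dots,w_n$, and $pr_k:W\to W$ the projection with $pr_k(\sum_i c_iw_i)=\sum_{i\ne k}c_iw_i$. The degenerate flag variety $\mathrm{Fl}^a_n$ is the variety of tuples $(V_1,\dots,V_{n-1})$ of subspaces of $W$ with $\dim V_k=k$ and $pr_{k+1}V_k\subset V_{k+1}$ for $k=1,\dots,n-2$. It admits a cellular decomposition into complex affine cells, so its Poincaré polynomial $P(t)$ involves only even powers of $t$; define $h_n(q)=P(q^{1/2})$, a polynomial of degree $n(n-1)/2$ with $h_0(q)=h_1(q)=1$. It is known (Cerulli Irelli–Feigin–Reineke) that $$h_n(q)=\sum_{f_1,\dots,f_{n-1}\ge 0} q^{\sum_{k=1}^{n-1}(k-f_k)(1-f_k+f_{k+1})}\prod_{k=1}^{n-1}\binom{1+f_{k-1}}{f_k}_{\!q}\prod_{k=1}^{n-1}\binom{1+f_{k+1}}{f_k}_{\!q},$$ with the convention $f_0=f_n=0$. *)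

theory Defs
  imports "HOL-Computational_Algebra.Computational_Algebra"
begin

definition qint :: "nat \<Rightarrow> complex poly" where
  "qint i = (\<Sum>j<i. monom 1 j)"

definition qfact :: "nat \<Rightarrow> complex poly" where
  "qfact m = (\<Prod>i=1..m. qint i)"

text \<open>Gaussian binomial coefficient (exact polynomial division); zero if k > m.\<close>
definition qbinom :: "nat \<Rightarrow> nat \<Rightarrow> complex poly" where
  "qbinom m k = (if k \<le> m then qfact m div (qfact k * qfact (m - k)) else 0)"

text \<open>Admissible index tuples (f_1,...,f_{n-1}); f_0 = f_n = 0 (and f vanishes outside 1..n-1).
  Only tuples with f_k \<le> k give nonzero terms, so the bound f_k \<le> n loses nothing.\<close>
definition ftuples :: "nat \<Rightarrow> (nat \<Rightarrow> nat) set" where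
  "ftuples n = {f. \<forall>k. (k \<in> {1..n-1} \<longrightarrow> f k \<le> n) \<and> (k \<notin> {1..n-1} \<longrightarrow> f k = 0)}"

definition hexp :: "nat \<Rightarrow> (nat \<Rightarrow> nat) \<Rightarrow> int" where
  "hexp n f = (\<Sum>k=1..n-1. (int k - int (f k)) * (1 - int (f k) + int (f (k+1))))"

text \<open>h_n(q) by the Cerulli Irelli--Feigin--Reineke formula. The exponent is nonnegative
  whenever the product of Gaussian binomials is nonzero.\<close>
definition hpoly :: "nat \<Rightarrow> complex poly" where
  "hpoly n = (\<Sum>f\<in>ftuples n. monom 1 (nat (hexp n f)) *
      (\<Prod>k=1..n-1. qbinom (1 + f (k-1)) (f k) * qbinom (1 + f (k+1)) (f k)))"

text \<open>\<tilde>h_n(q) = q^(n(n-1)/2) h_n(1/q): coefficient reversal w.r.t. degree n(n-1)/2.\<close>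
definition htpoly :: "nat \<Rightarrow> complex poly" where
  "htpoly n = Poly (map (\<lambda>i. coeff (hpoly n) (n*(n-1) div 2 - i)) [0..<n*(n-1) div 2 + 1])"

text \<open>Truncations of the J-fraction
  1/(1 - g_m s - l_m s^2/(1 - g_{m+1} s - l_{m+1} s^2/(...))) at depth N (innermost tail 1).\<close>
fun jfrac :: "(nat \<Rightarrow> complex) \<Rightarrow> (nat \<Rightarrow> complex) \<Rightarrow> nat \<Rightarrow> nat \<Rightarrow> complex fps" where
  "jfrac g l m 0 = 1"
| "jfrac g l m (Suc N) =
     inverse (1 - fps_const (g m) * fps_X - fps_const (l m) * fps_X ^ 2 * jfrac g l (Suc m) N)"

end

theory Submission
  imports Defs
begin


fun Sw :: "(nat\<Rightarrow>complex) \<Rightarrow> (nat\<Rightarrow>complex) \<Rightarrow> (nat\<Rightarrow>complex) \<Rightarrow> nat \<Rightarrow> nat \<Rightarrow> complex" where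
  "Sw g u d h 0 = (if h = 0 then 1 else 0)"
| "Sw g u d h (Suc n) = g h * Sw g u d h n + u h * Sw g u d (Suc h) n
     + (if h = 0 then 0 else d h * Sw g u d (h - 1) n)"

lemma Sw_zero: "n < h \<Longrightarrow> Sw g u d h n = 0"
  by (induction n arbitrary: h) auto

lemma Sw_trunc:
  "h + n \<le> 2*N \<Longrightarrow> Sw (\<lambda>h. if h<N then g h else 0) (\<lambda>h. if h<N then u h else 0) d h n = Sw g u d h n"
proof (induction n arbitrary: h)
  case 0 then show ?case by simp
next
  case (Suc n)
  show ?case
  proof (cases "h < N")
    case True
    with Suc show ?thesis by auto
  next
    case False
    have a: "Sw g u d h n = 0" "Sw g u d (Suc h) n = 0" using False Suc.prems by (auto intro!: Sw_zero)
    have "h > 0" using False Suc.prems by auto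
    have b: "Sw (\<lambda>h. if h<N then g h else 0) (\<lambda>h. if h<N then u h else 0) d (h-1) n = Sw g u d (h-1) n"
      using Suc by auto
    show ?thesis
    proof (cases "h = N")
      case True then show ?thesis using False a b \<open>h>0\<close> by simp
    next
      case F2: False
      have "Sw g u d (h-1) n = 0" using False F2 Suc.prems by (intro Sw_zero) auto
      moreover have "Sw g u d h (Suc n) = 0" using False F2 Suc.prems by (intro Sw_zero) auto
      ultimately show ?thesis using False b \<open>h>0\<close> by simp
    qed
  qed
qed

lemma jfrac_0: "jfrac g l m N $ 0 = 1"
  by (cases N) simp_all

lemma jfrac_eq:
  "jfrac g l m (Suc N) * (1 - fps_const (g m) * fps_X - fps_const (l m) * fps_X ^ 2 * jfrac g l (Suc m) N) = 1"
  by (simp del: jfrac.simps(1) add: inverse_mult_eq_1)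

lemma jfrac_coeff:
  fixes g u d :: "nat \<Rightarrow> complex" and N :: nat
  defines "l \<equiv> \<lambda>m. u m * d (Suc m)"
  defines "K \<equiv> \<lambda>m. jfrac g l m (N - m)"
  defines "P \<equiv> \<lambda>h. fps_const (\<Prod>i\<in>{1..h}. d i) * fps_X ^ h * (\<Prod>i<h. K i)"
  defines "G \<equiv> \<lambda>h. P h * K h"
  defines "g' \<equiv> \<lambda>h. if h<N then g h else 0"
  defines "u' \<equiv> \<lambda>h. if h<N then u h else 0"
  shows "h \<le> N \<Longrightarrow> G h $ n = Sw g' u' d h n"
proof -
  have P0: "P 0 = 1" by (simp add: P_def)
  have PS: "P (Suc h) = fps_const (d (Suc h)) * fps_X * G h" for h
  proof -
    have "(\<Prod>i\<in>{1..Suc h}. d i) = d (Suc h) * (\<Prod>i\<in>{1..h}. d i)"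
      by (simp add: prod.nat_ivl_Suc' mult.commute)
    then show ?thesis unfolding P_def G_def
      by (simp add: prod.lessThan_Suc mult_ac)
  qed
  have KN: "K N = 1" by (simp add: K_def)
  have Klt: "K h * (1 - fps_const (g h) * fps_X - fps_const (l h) * fps_X ^ 2 * K (Suc h)) = 1"
    if "h < N" for h
  proof -
    have "N - h = Suc (N - Suc h)" using that by simp
    then show ?thesis unfolding K_def using jfrac_eq[of g l h "N - Suc h"] by simp
  qed
  have ident: "G h = (if h = 0 then 1 else 0) + fps_X * (fps_const (g' h) * G h
      + fps_const (u' h) * G (Suc h) + (if h = 0 then 0 else fps_const (d h) * G (h - 1)))"
    if "h \<le> N" for h
  proof -
    have Ph: "P h = (if h = 0 then 1 else 0) + (if h = 0 then 0 else fps_X * (fps_const (d h) * G (h - 1)))"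
      by (cases h) (simp_all add: P0 PS mult_ac)
    show ?thesis
    proof (cases "h < N")
      case True
      have "G h - fps_X * fps_const (g h) * G h - fps_X * fps_const (u h) * G (Suc h)
          = P h * (K h * (1 - fps_const (g h) * fps_X - fps_const (l h) * fps_X ^ 2 * K (Suc h)))"
        unfolding G_def PS l_def by (simp add: algebra_simps power2_eq_square)
      also have "\<dots> = P h" using Klt[OF True] by simp
      finally have "G h = P h + (fps_X * fps_const (g h) * G h + fps_X * fps_const (u h) * G (Suc h))"
        by (metis diff_diff_eq eq_diff_eq)
      also have "\<dots> = (if h = 0 then 1 else 0) + fps_X * (fps_const (g' h) * G h
      + fps_const (u' h) * G (Suc h) + (if h = 0 then 0 else fps_const (d h) * G (h - 1)))"
        using True by (cases "h = 0") (simp_all add: Ph P0 g'_def u'_def algebra_simps)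
      finally show ?thesis .
    next
      case False
      then have "h = N" using that by simp
      then show ?thesis using Ph False KN unfolding G_def g'_def u'_def by simp
    qed
  qed
  show "h \<le> N \<Longrightarrow> G h $ n = Sw g' u' d h n"
  proof (induction n arbitrary: h)
    case 0
    show ?case by (subst ident[OF 0]) simp
  next
    case (Suc n)
    have e1: "u' h * G (Suc h) $ n = u' h * Sw g' u' d (Suc h) n"
      using Suc by (cases "h < N") (auto simp: u'_def)
    have e2: "(if h = 0 then 0 else d h * G (h - 1) $ n) = (if h = 0 then 0 else d h * Sw g' u' d (h - 1) n)"
      using Suc by auto
    have c: "G h $ Suc n = g' h * G h $ n + u' h * G (Suc h) $ n + (if h=0 then 0 else d h * G (h-1) $ n)"
      by (subst ident[OF Suc.prems]) simp
    show ?case by (simp only: c e1 e2 Suc.IH[OF Suc.prems] Sw.simps)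
  qed
qed



definition sw :: "(nat\<Rightarrow>complex) \<Rightarrow> (nat\<Rightarrow>complex) \<Rightarrow> (nat\<Rightarrow>complex) \<Rightarrow> nat \<Rightarrow> nat \<Rightarrow> complex" where
  "sw g u d a b = (if b = a then g a else if b = Suc a then u a else if a = Suc b then d a else 0)"

definition Apaths :: "nat \<Rightarrow> nat \<Rightarrow> (nat \<Rightarrow> nat) set" where
  "Apaths n h = {f. f 0 = h \<and> f n = 0 \<and> (\<forall>k>n. f k = 0) \<and>
      (\<forall>k<n. f (Suc k) \<le> Suc (f k) \<and> f k \<le> Suc (f (Suc k)))}"

lemma Apaths_bound: "f \<in> Apaths n h \<Longrightarrow> k \<le> n \<Longrightarrow> f k \<le> h + k"
proof (induction k)
  case 0 thus ?case by (simp add: Apaths_def)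
next
  case (Suc k)
  then have "f (Suc k) \<le> Suc (f k)" by (simp add: Apaths_def)
  with Suc show ?case by simp
qed

lemma finite_Apaths: "finite (Apaths n h)"
proof (rule finite_subset)
  show "Apaths n h \<subseteq> {f. \<forall>x. (x\<in>{..n} \<longrightarrow> f x \<in> {..h+n}) \<and> (x\<notin>{..n} \<longrightarrow> f x = 0)}"
  proof
    fix f assume f: "f \<in> Apaths n h"
    have "f x \<le> h + n" if "x \<le> n" for x using Apaths_bound[OF f that] that by simp
    moreover have "f x = 0" if "\<not> x \<le> n" for x using f that by (simp add: Apaths_def)
    ultimately show "f \<in> {f. \<forall>x. (x\<in>{..n} \<longrightarrow> f x \<in> {..h+n}) \<and> (x\<notin>{..n} \<longrightarrow> f x = 0)}" by auto
  qed
  show "finite \<dots>" by (rule finite_set_of_finite_funs) auto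
qed

lemma Apaths_0: "Apaths 0 h = (if h = 0 then {\<lambda>_. 0} else {})"
  by (auto simp: Apaths_def fun_eq_iff) (metis neq0_conv)

definition Hs :: "nat \<Rightarrow> nat set" where
  "Hs h = {h, Suc h} \<union> (if h = 0 then {} else {h - 1})"

lemma Apaths_Suc:
  "Apaths (Suc n) h = (\<lambda>(h', t). case_nat h t) ` (SIGMA h':Hs h. Apaths n h')"
proof (intro equalityI subsetI)
  fix f assume f: "f \<in> Apaths (Suc n) h"
  let ?t = "\<lambda>k. f (Suc k)"
  have "f = case_nat h ?t" using f by (auto simp: Apaths_def fun_eq_iff split: nat.split)
  moreover have "?t 0 \<in> Hs h" using f by (auto simp: Apaths_def Hs_def)
  moreover have "?t \<in> Apaths n (?t 0)" using f by (auto simp: Apaths_def)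
  ultimately show "f \<in> (\<lambda>(h', t). case_nat h t) ` (SIGMA h':Hs h. Apaths n h')"
    by (auto intro!: image_eqI[where x="(?t 0, ?t)"])
next
  fix f assume "f \<in> (\<lambda>(h', t). case_nat h t) ` (SIGMA h':Hs h. Apaths n h')"
  then obtain h' t where ht: "h' \<in> Hs h" "t \<in> Apaths n h'" and f: "f = case_nat h t" by auto
  show "f \<in> Apaths (Suc n) h"
    using ht unfolding f by (auto simp: Apaths_def Hs_def less_Suc_eq_0_disj split: if_splits nat.split)
qed

lemma inj_case: "inj_on (\<lambda>(h', t). case_nat h t) (SIGMA h':Hs h. Apaths n h')"
proof (rule inj_onI, clarsimp)
  fix a t b s
  assume "t \<in> Apaths n a" "s \<in> Apaths n b" and e: "case_nat h t = case_nat h s"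
  have "t = s"
  proof
    fix k show "t k = s k" using fun_cong[OF e, of "Suc k"] by simp
  qed
  then show "a = b \<and> t = s" using \<open>t \<in> Apaths n a\<close> \<open>s \<in> Apaths n b\<close> by (simp add: Apaths_def)
qed

lemma path_sum: "(\<Sum>f\<in>Apaths n h. \<Prod>k<n. sw g u d (f k) (f (Suc k))) = Sw g u d h n"
proof (induction n arbitrary: h)
  case 0 then show ?case by (simp add: Apaths_0)
next
  case (Suc n)
  have fin: "finite (Hs h)" by (simp add: Hs_def)
  have "(\<Sum>f\<in>Apaths (Suc n) h. \<Prod>k<Suc n. sw g u d (f k) (f (Suc k)))
      = (\<Sum>(h',t)\<in>(SIGMA h':Hs h. Apaths n h'). \<Prod>k<Suc n. sw g u d (case_nat h t k) (case_nat h t (Suc k)))"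
    unfolding Apaths_Suc by (subst sum.reindex[OF inj_case]) (simp add: case_prod_beta)
  also have "\<dots> = (\<Sum>(h',t)\<in>(SIGMA h':Hs h. Apaths n h'). sw g u d h h' * (\<Prod>k<n. sw g u d (t k) (t (Suc k))))"
    by (rule sum.cong) (auto simp del: prod.lessThan_Suc simp add: prod.lessThan_Suc_shift Apaths_def)
  also have "\<dots> = (\<Sum>h'\<in>Hs h. sw g u d h h' * Sw g u d h' n)"
    by (subst sum.Sigma[symmetric]) (auto simp: fin finite_Apaths sum_distrib_left[symmetric] Suc.IH)
  also have "\<dots> = Sw g u d h (Suc n)"
  proof (cases h)
    case 0
    have "Hs h = {0, 1}" using 0 by (auto simp: Hs_def)
    then show ?thesis using 0 by (simp add: sw_def)
  next
    case (Suc h')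
    have "Hs h = insert h (insert (Suc h) {h'})" using Suc by (auto simp: Hs_def)
    moreover have "h \<notin> insert (Suc h) {h'}" "Suc h \<noteq> h'" using Suc by auto
    ultimately show ?thesis using Suc by (simp add: sw_def)
  qed
  finally show ?case .
qed



lemma poly_bound: "degree (p::complex poly) \<le> M \<Longrightarrow> poly p x = (\<Sum>i<Suc M. coeff p i * x ^ i)"
proof -
  assume "degree p \<le> M"
  have "poly p x = (\<Sum>i\<le>degree p. coeff p i * x ^ i)" by (rule poly_altdef)
  also have "\<dots> = (\<Sum>i\<le>M. coeff p i * x ^ i)"
    using \<open>degree p \<le> M\<close> by (intro sum.mono_neutral_left) (auto simp: coeff_eq_0)
  finally show ?thesis by (simp add: lessThan_Suc_atMost)
qed

lemma poly_refl:
  fixes p :: "complex poly" and x :: complex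
  assumes "degree p \<le> D" "x \<noteq> 0"
  shows "poly (Poly (map (\<lambda>i. coeff p (D - i)) [0..<D+1])) x = x ^ D * poly p (inverse x)"
proof -
  let ?L = "map (\<lambda>i. coeff p (D - i)) [0..<D+1]"
  have "degree (Poly ?L) \<le> D + 1" using degree_Poly[of ?L] by simp
  then have "poly (Poly ?L) x = (\<Sum>i<Suc (D+1). coeff (Poly ?L) i * x ^ i)" by (rule poly_bound)
  also have "\<dots> = (\<Sum>i<Suc D. coeff p (D - i) * x ^ i)"
    by (simp add: nth_default_def del: upt_Suc)
  also have "\<dots> = (\<Sum>i<Suc D. coeff p (Suc D - Suc i) * x ^ (Suc D - Suc (Suc D - Suc i)))"
    by (rule sum.cong) auto
  also have "\<dots> = (\<Sum>i<Suc D. coeff p i * x ^ (D - i))"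
    by (subst sum.nat_diff_reindex[where g = "\<lambda>j. coeff p j * x ^ (Suc D - Suc j)"]) simp
  also have "\<dots> = (\<Sum>i<Suc D. x ^ D * (coeff p i * inverse x ^ i))"
    by (rule sum.cong) (auto simp: power_diff assms(2) field_simps)
  also have "\<dots> = x ^ D * poly p (inverse x)"
    by (simp only: poly_bound[OF assms(1)] sum_distrib_left)
  finally show ?thesis .
qed

lemma poly_eq_on_infinite:
  fixes p r :: "complex poly"
  assumes "\<And>x. x \<noteq> 0 \<Longrightarrow> x \<noteq> -1 \<Longrightarrow> poly p x = poly r x"
  shows "p = r"
proof (rule ccontr)
  assume "p \<noteq> r"
  then have "finite {x. poly (p - r) x = 0}" by (intro poly_roots_finite) simp
  moreover have "UNIV - {0, -1} \<subseteq> {x. poly (p - r) x = 0}" using assms by auto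
  ultimately have "finite (UNIV - {0, -1 :: complex})" by (rule finite_subset[rotated])
  then show False using infinite_UNIV_char_0[where 'a=complex] by simp
qed

lemma poly_qint: "poly (qint m) x = (\<Sum>j<m. x ^ j)"
  by (simp add: qint_def poly_sum poly_monom)

lemma qint_nz: "m \<ge> 1 \<Longrightarrow> qint m \<noteq> 0"
proof
  assume "m \<ge> 1" "qint m = 0"
  then have "poly (qint m) 0 = 0" by simp
  moreover have "poly (qint m) 0 = 1" using \<open>m \<ge> 1\<close>
    by (simp add: poly_qint zero_power) (subst sum.remove[of _ 0], auto simp: zero_power)
  ultimately show False by simp
qed

lemma degree_qint: "degree (qint m) \<le> m - 1"
  unfolding qint_def by (rule degree_sum_le) (auto intro: order.trans[OF degree_monom_le])

lemma qint_refl: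
  assumes "x \<noteq> 0"
  shows "x ^ m * poly (qint (Suc m)) (inverse x) = poly (qint (Suc m)) x"
proof -
  have "x ^ m * poly (qint (Suc m)) (inverse x) = (\<Sum>j<Suc m. x ^ m * inverse x ^ j)"
    by (simp only: poly_qint sum_distrib_left)
  also have "\<dots> = (\<Sum>j<Suc m. x ^ (Suc m - Suc j))"
    by (rule sum.cong) (auto simp: power_diff assms field_simps)
  also have "\<dots> = (\<Sum>j<Suc m. x ^ j)" by (rule sum.nat_diff_reindex)
  finally show ?thesis by (simp add: poly_qint)
qed

lemma qint_1: "qint 1 = 1" by (simp add: qint_def)
lemma qint_Suc0: "qint (Suc 0) = 1" by (simp add: qint_def)
lemma qint_2: "qint 2 = [:1, 1:]"
  by (simp add: qint_def numeral_2_eq_2 monom_altdef one_pCons)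

lemma qfact_0: "qfact 0 = 1" by (simp add: qfact_def)
lemma qfact_Suc: "qfact (Suc m) = qfact m * qint (Suc m)"
  by (simp add: qfact_def prod.nat_ivl_Suc')
lemma qfact_nz: "qfact m \<noteq> 0"
  by (induction m) (auto simp: qfact_0 qfact_Suc qint_nz)

lemma qbinom_0: "qbinom m 0 = 1"
  by (simp add: qbinom_def qfact_0 qfact_nz)
lemma qbinom_same: "qbinom m m = 1"
  by (simp add: qbinom_def qfact_0 qfact_nz)
lemma qbinom_gt: "k > m \<Longrightarrow> qbinom m k = 0"
  by (simp add: qbinom_def)
lemma qbinom_Suc_1: "qbinom (Suc a) 1 = qint (Suc a)"
  by (simp add: qbinom_def qfact_Suc qfact_0 qint_1 qint_Suc0 qfact_nz)
lemma qbinom_Suc_1': "qbinom (Suc a) (Suc 0) = qint (Suc a)"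
  using qbinom_Suc_1 by simp
lemma qbinom_Suc_same: "qbinom (Suc a) a = qint (Suc a)"
  by (simp add: qbinom_def qfact_Suc qfact_0 qint_1 qint_Suc0 qfact_nz Suc_diff_le)

lemma qint_2': "qint 2 = 1 + monom 1 1"
  by (simp add: qint_def numeral_2_eq_2)

lemma qint_even: "qint (2*j) = qint 2 * (\<Sum>i<j. monom 1 (2*i))"
proof (induction j)
  case 0 then show ?case by (simp add: qint_def)
next
  case (Suc j)
  have "qint (2 * Suc j) = qint (2*j) + monom 1 (2*j) + monom 1 (Suc (2*j))"
    by (simp add: qint_def)
  also have "\<dots> = qint 2 * (\<Sum>i<j. monom 1 (2*i)) + qint 2 * monom 1 (2*j)"
    unfolding Suc.IH qint_2' by (simp add: algebra_simps mult_monom)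
  finally show ?case by (simp add: algebra_simps)
qed

lemma qint2_dvd: "qint 2 dvd qint (Suc a) * qint (Suc (Suc a))"
proof (cases "even (Suc a)")
  case True
  then obtain j where "Suc a = 2*j" by blast
  then show ?thesis by (simp add: qint_even)
next
  case False
  then have "even (Suc (Suc a))" by simp
  then obtain j where "Suc (Suc a) = 2*j" by blast
  then show ?thesis by (simp add: qint_even)
qed

lemma qfact_2: "qfact 2 = qint 2"
  by (simp add: numeral_2_eq_2 qfact_Suc qfact_0 qint_Suc0)

lemma qbinom_2: "qbinom (Suc (Suc a)) 2 = qint (Suc a) * qint (Suc (Suc a)) div qint 2"
proof -
  have "qbinom (Suc (Suc a)) 2 = (qfact a * (qint (Suc a) * qint (Suc (Suc a)))) div (qfact a * qint 2)"
    by (simp add: qbinom_def qfact_Suc qfact_2 mult_ac)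
  also have "\<dots> = qint (Suc a) * qint (Suc (Suc a)) div qint 2"
    by (rule div_mult_mult1) (rule qfact_nz)
  finally show ?thesis .
qed

lemma qbinom_2': "qbinom (Suc (Suc a)) a = qbinom (Suc (Suc a)) 2"
  by (simp add: qbinom_def mult.commute numeral_2_eq_2)

lemma qbinom_2_mult: "qint 2 * qbinom (Suc (Suc a)) 2 = qint (Suc a) * qint (Suc (Suc a))"
  unfolding qbinom_2 by (rule dvd_mult_div_cancel[OF qint2_dvd])

lemma poly_qbinom_2: "poly (qbinom (Suc (Suc a)) 2) x * (1 + x) = poly (qint (Suc a)) x * poly (qint (Suc (Suc a))) x"
proof -
  have "poly (qint 2 * qbinom (Suc (Suc a)) 2) x = poly (qint (Suc a) * qint (Suc (Suc a))) x"
    by (simp only: qbinom_2_mult)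
  then show ?thesis by (simp add: qint_2' poly_monom mult_ac)
qed

lemma qbinom_2_refl:
  assumes "x \<noteq> 0" "x \<noteq> -1"
  shows "x ^ (2*a) * poly (qbinom (Suc (Suc a)) 2) (inverse x) = poly (qbinom (Suc (Suc a)) 2) x"
proof -
  let ?c = "poly (qbinom (Suc (Suc a)) 2) (inverse x)"
  have e1: "?c * (1 + inverse x) = poly (qint (Suc a)) (inverse x) * poly (qint (Suc (Suc a))) (inverse x)"
    by (rule poly_qbinom_2)
  have "x ^ (2*a) * ?c * (1 + x) = (x ^ a * poly (qint (Suc a)) (inverse x)) * (x ^ (Suc a) * poly (qint (Suc (Suc a))) (inverse x))"
  proof -
    have "x ^ (2*a) * ?c * (1 + x) = x ^ (2*a+1) * (?c * (1 + inverse x))"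
      using assms(1) by (simp add: field_simps)
    also have "\<dots> = (x ^ a * poly (qint (Suc a)) (inverse x)) * (x ^ (Suc a) * poly (qint (Suc (Suc a))) (inverse x))"
    proof -
      have p: "x ^ (2*a+1) = x ^ a * x ^ Suc a" by (simp add: power_add[symmetric] mult_2)
      show ?thesis unfolding e1 p by (simp add: mult_ac)
    qed
    finally show ?thesis .
  qed
  also have "\<dots> = poly (qint (Suc a)) x * poly (qint (Suc (Suc a))) x"
    by (simp only: qint_refl[OF assms(1)])
  also have "\<dots> = poly (qbinom (Suc (Suc a)) 2) x * (1 + x)"
    by (rule poly_qbinom_2[symmetric])
  finally show ?thesis using assms(2)
    by (metis add_eq_0_iff mult_right_cancel neg_equal_iff_equal add.commute)
qed

lemma degree_qbinom_2: "degree (qbinom (Suc (Suc a)) 2) \<le> 2*a"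
proof -
  have nz: "qbinom (Suc (Suc a)) 2 \<noteq> 0"
    using qbinom_2_mult qint_nz[of "Suc a"] qint_nz[of "Suc (Suc a)"] by (metis mult_zero_right no_zero_divisors le_add1 plus_1_eq_Suc)
  have d2: "degree (qint 2) = 1" by (simp add: qint_2)
  have "1 + degree (qbinom (Suc (Suc a)) 2) = degree (qint 2 * qbinom (Suc (Suc a)) 2)"
    using nz qint_nz[of 2] by (simp add: degree_mult_eq d2)
  also have "\<dots> \<le> degree (qint (Suc a)) + degree (qint (Suc (Suc a)))"
    unfolding qbinom_2_mult by (rule degree_mult_le)
  also have "\<dots> \<le> a + Suc a" using degree_qint[of "Suc a"] degree_qint[of "Suc (Suc a)"] by simp
  finally show ?thesis by simp
qed

definition stp :: "nat \<Rightarrow> nat \<Rightarrow> complex poly" where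
  "stp a b = qbinom (Suc a) b * qbinom (Suc b) a"

definition ex :: "nat \<Rightarrow> nat \<Rightarrow> nat" where
  "ex a b = 2 * min a b + (if b = Suc a then 1 else 0)"

definition swp :: "nat \<Rightarrow> nat \<Rightarrow> complex poly" where
  "swp a b = (if b = a then qbinom (a+1) 1 ^ 2 else if b = Suc a then [:0,1:] * qbinom (a+2) 2
     else if a = Suc b then qbinom (a+1) 2 else 0)"

lemma stp_zero: "\<not> (b \<le> Suc a \<and> a \<le> Suc b) \<Longrightarrow> stp a b = 0"
  by (auto simp: stp_def qbinom_gt)

lemma stp_cases:
  assumes "b \<le> Suc a" "a \<le> Suc b"
  obtains "b = a" | "b = Suc a" | c where "a = Suc c" "b = c"
  using assms by (metis le_SucE le_antisym)

lemma stp_refl: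
  assumes "b \<le> Suc a" "a \<le> Suc b" "x \<noteq> 0" "x \<noteq> -1"
  shows "x ^ (ex a b) * poly (stp a b) (inverse x) = poly (swp a b) x"
  using assms(1,2)
proof (cases rule: stp_cases)
  case 1
  have "x ^ (ex a b) * poly (stp a b) (inverse x) = (x ^ a * poly (qint (Suc a)) (inverse x))^2"
  proof -
    have xx: "x ^ (2*a) = x^a*x^a" "x ^ (a*2) = x^a*x^a" by (simp_all add: mult_2 mult_2_right power_add)
    show ?thesis using 1 by (simp add: ex_def stp_def qbinom_Suc_same power2_eq_square xx mult_ac)
  qed
  also have "\<dots> = poly (swp a b) x"
    using 1 by (simp only: qint_refl[OF assms(3)]) (simp add: swp_def qbinom_Suc_1')
  finally show ?thesis .
next
  case 2
  have "x ^ (ex a b) * poly (stp a b) (inverse x) = x * (x ^ (2*a) * poly (qbinom (Suc (Suc a)) 2) (inverse x))"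
    using 2 by (simp add: ex_def stp_def qbinom_same qbinom_2' mult_ac)
  also have "\<dots> = poly (swp a b) x"
    using 2 by (simp only: qbinom_2_refl[OF assms(3,4)]) (simp add: swp_def)
  finally show ?thesis .
next
  case (3 c)
  have "x ^ (ex a b) * poly (stp a b) (inverse x) = x ^ (2*c) * poly (qbinom (Suc (Suc c)) 2) (inverse x)"
    using 3 by (simp add: ex_def stp_def qbinom_same qbinom_2')
  also have "\<dots> = poly (swp a b) x"
    using 3 by (simp only: qbinom_2_refl[OF assms(3,4)]) (simp add: swp_def)
  finally show ?thesis .
qed

lemma degree_stp:
  assumes "b \<le> Suc a" "a \<le> Suc b"
  shows "degree (stp a b) \<le> 2 * min a b"
  using assms
proof (cases rule: stp_cases)
  case 1
  have "degree (stp a b) \<le> degree (qint (Suc a)) + degree (qint (Suc a))"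
    using 1 by (simp add: stp_def qbinom_Suc_same degree_mult_le)
  also have "\<dots> \<le> 2 * min a b" using 1 degree_qint[of "Suc a"] by simp
  finally show ?thesis .
next
  case 2
  then show ?thesis using degree_qbinom_2[of a] by (simp add: stp_def qbinom_same qbinom_2')
next
  case (3 c)
  then show ?thesis using degree_qbinom_2[of c] by (simp add: stp_def qbinom_same qbinom_2')
qed

lemma degree_stp': "degree (stp a b) \<le> ex a b"
proof (cases "b \<le> Suc a \<and> a \<le> Suc b")
  case True then show ?thesis using degree_stp[of b a] by (simp add: ex_def)
next
  case False then show ?thesis by (simp add: stp_zero)
qed



lemma ftuples_basic:
  assumes "f \<in> ftuples n"
  shows "f 0 = 0" "f n = 0" "\<And>k. n < k \<Longrightarrow> f k = 0"
proof -
  have h: "\<And>k. k \<notin> {1..n-1} \<Longrightarrow> f k = 0" using assms by (simp add: ftuples_def)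
  show "f 0 = 0" by (rule h) simp
  show "f n = 0" by (rule h) auto
  show "\<And>k. n < k \<Longrightarrow> f k = 0" by (rule h) simp
qed

lemma Apaths_ftuples: "Apaths n 0 \<subseteq> ftuples n"
proof
  fix f assume f: "f \<in> Apaths n 0"
  have A: "f 0 = 0" "f n = 0" "\<And>k. n < k \<Longrightarrow> f k = 0" using f by (simp_all add: Apaths_def)
  have B: "f k \<le> n" if "k \<in> {1..n-1}" for k
  proof -
    have "k \<le> n" using that by auto
    then show ?thesis using Apaths_bound[OF f, of k] by simp
  qed
  have C: "f k = 0" if "k \<notin> {1..n-1}" for k
  proof -
    have "k = 0 \<or> k = n \<or> n < k" using that by auto
    then show ?thesis by (elim disjE) (use A in auto)
  qed
  show "f \<in> ftuples n" unfolding ftuples_def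
  proof (intro CollectI allI conjI impI)
    fix k
    show "k \<in> {1..n-1} \<Longrightarrow> f k \<le> n" by (rule B)
    show "k \<notin> {1..n-1} \<Longrightarrow> f k = 0" by (rule C)
  qed
qed

lemma not_Apaths:
  assumes "f \<in> ftuples n" "f \<notin> Apaths n 0"
  shows "\<exists>k<n. \<not> (f (Suc k) \<le> Suc (f k) \<and> f k \<le> Suc (f (Suc k)))"
proof (rule ccontr)
  assume "\<not> ?thesis"
  then have "\<forall>k<n. f (Suc k) \<le> Suc (f k) \<and> f k \<le> Suc (f (Suc k))" by blast
  then have "f \<in> Apaths n 0" using ftuples_basic[OF assms(1)] unfolding Apaths_def by blast
  with assms(2) show False by simp
qed

lemma finite_ftuples: "finite (ftuples n)"
proof -
  have "ftuples n = {f. \<forall>x. (x \<in> {1..n-1} \<longrightarrow> f x \<in> {..n}) \<and> (x \<notin> {1..n-1} \<longrightarrow> f x = 0)}"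
    by (simp add: ftuples_def)
  also have "finite \<dots>" by (rule finite_set_of_finite_funs) auto
  finally show ?thesis .
qed

lemma prod_reindex:
  assumes "f 0 = 0" "f n = 0"
  shows "(\<Prod>k=1..n-1. qbinom (1 + f (k-1)) (f k) * qbinom (1 + f (k+1)) (f k))
       = (\<Prod>k<n. stp (f k) (f (Suc k)))"
proof (cases n)
  case 0 then show ?thesis by simp
next
  case (Suc m)
  have "(\<Prod>k=1..n-1. qbinom (1 + f (k-1)) (f k) * qbinom (1 + f (k+1)) (f k))
     = (\<Prod>k<m. qbinom (Suc (f k)) (f (Suc k)) * qbinom (Suc (f (Suc (Suc k)))) (f (Suc k)))"
    using Suc by (simp add: prod.atLeast1_atMost_eq)
  also have "\<dots> = (\<Prod>k<m. qbinom (Suc (f k)) (f (Suc k))) * (\<Prod>k<m. qbinom (Suc (f (Suc (Suc k)))) (f (Suc k)))"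
    by (rule prod.distrib)
  also have "\<dots> = (\<Prod>k<Suc m. qbinom (Suc (f k)) (f (Suc k))) * (\<Prod>k<Suc m. qbinom (Suc (f (Suc k))) (f k))"
  proof -
    have p1: "(\<Prod>k<Suc m. qbinom (Suc (f k)) (f (Suc k))) = (\<Prod>k<m. qbinom (Suc (f k)) (f (Suc k)))"
      using assms Suc by (simp add: qbinom_0)
    have p2: "(\<Prod>k<Suc m. qbinom (Suc (f (Suc k))) (f k)) = (\<Prod>k<m. qbinom (Suc (f (Suc (Suc k)))) (f (Suc k)))"
      by (simp only: prod.lessThan_Suc_shift) (simp add: assms qbinom_0)
    show ?thesis unfolding p1 p2 ..
  qed
  also have "\<dots> = (\<Prod>k<n. stp (f k) (f (Suc k)))"
    using Suc by (simp add: stp_def prod.distrib)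
  finally show ?thesis .
qed

lemma hexp_sum:
  assumes "f 0 = 0"
  shows "hexp n f = (\<Sum>k<n. (int k - int (f k)) * (1 - int (f k) + int (f (k+1))))"
proof (cases n)
  case 0 then show ?thesis by (simp add: hexp_def)
next
  case (Suc m)
  then show ?thesis using assms
    by (simp add: hexp_def sum.atLeast1_atMost_eq sum.lessThan_Suc_shift[where n=m] del: sum.lessThan_Suc)
qed

lemma hexp_ident_aux:
  fixes g :: "nat \<Rightarrow> int"
  assumes "g 0 = 0"
  shows "2 * (\<Sum>k<n. (int k - g k) * (1 - g k + g (k+1)))
     + (\<Sum>k<n. 2 * g k * (2 + g (k+1) - g k)) = int n * (int n - 1) + 2 * (int n - 1) * g n"
proof (induction n)
  case 0 then show ?case using assms by simp
next
  case (Suc n)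
  have "2 * (\<Sum>k<Suc n. (int k - g k) * (1 - g k + g (k+1))) + (\<Sum>k<Suc n. 2 * g k * (2 + g (k+1) - g k))
     = (2 * (\<Sum>k<n. (int k - g k) * (1 - g k + g (k+1))) + (\<Sum>k<n. 2 * g k * (2 + g (k+1) - g k)))
       + (2 * ((int n - g n) * (1 - g n + g (n+1))) + 2 * g n * (2 + g (n+1) - g n))"
    by (simp add: algebra_simps)
  also have "\<dots> = int (Suc n) * (int (Suc n) - 1) + 2 * (int (Suc n) - 1) * g (Suc n)"
    unfolding Suc.IH by (simp add: algebra_simps)
  finally show ?case .
qed

lemma step_ident:
  assumes "b \<le> Suc a" "a \<le> Suc b"
  shows "2 * int a * (2 + int b - int a) = 2 * int (ex a b) + (int b * (int b - 3) - int a * (int a - 3))"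
  using assms
proof (cases rule: stp_cases)
  case 1 then show ?thesis by (simp add: ex_def algebra_simps)
next
  case 2 then show ?thesis by (simp add: ex_def algebra_simps)
next
  case (3 c) then show ?thesis by (simp add: ex_def algebra_simps)
qed

lemma hexp_Apaths:
  assumes f: "f \<in> Apaths n 0"
  shows "0 \<le> hexp n f" "nat (hexp n f) + (\<Sum>k<n. ex (f k) (f (Suc k))) = n * (n - 1) div 2"
proof -
  have f0: "f 0 = 0" and fn: "f n = 0" and st: "\<And>k. k < n \<Longrightarrow> f (Suc k) \<le> Suc (f k) \<and> f k \<le> Suc (f (Suc k))"
    using f by (auto simp: Apaths_def)
  have bd: "f k \<le> k" if "k \<le> n" for k using Apaths_bound[OF f that] by simp
  show nn: "0 \<le> hexp n f"
    unfolding hexp_sum[of f n, OF f0]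
  proof (rule sum_nonneg)
    fix k assume "k \<in> {..<n}"
    then have "f k \<le> k" "f k \<le> Suc (f (Suc k))" using bd st by auto
    then show "0 \<le> (int k - int (f k)) * (1 - int (f k) + int (f (k+1)))" by simp
  qed
  have "(\<Sum>k<n. 2 * int (f k) * (2 + int (f (k+1)) - int (f k)))
      = (\<Sum>k<n. 2 * int (ex (f k) (f (Suc k))) + (int (f (Suc k)) * (int (f (Suc k)) - 3) - int (f k) * (int (f k) - 3)))"
    by (rule sum.cong) (use step_ident st in auto)
  also have "\<dots> = 2 * int (\<Sum>k<n. ex (f k) (f (Suc k)))"
    using sum_lessThan_telescope[where f = "\<lambda>k. int (f k) * (int (f k) - 3)" and m = n] f0 fn
    by (simp add: sum.distrib sum_distrib_left)
  finally have "2 * hexp n f + 2 * int (\<Sum>k<n. ex (f k) (f (Suc k))) = int n * (int n - 1)"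
    using hexp_ident_aux[of "\<lambda>k. int (f k)" n] f0 fn unfolding hexp_sum[of f n, OF f0] by simp
  moreover have "int (n * (n - 1)) = int n * (int n - 1)" by (cases n) (auto simp: algebra_simps)
  ultimately have "int (2 * (nat (hexp n f) + (\<Sum>k<n. ex (f k) (f (Suc k))))) = int (n * (n - 1))"
    using nn by (cases n) auto
  then have "2 * (nat (hexp n f) + (\<Sum>k<n. ex (f k) (f (Suc k)))) = n * (n - 1)"
    by (simp only: of_nat_eq_iff)
  then show "nat (hexp n f) + (\<Sum>k<n. ex (f k) (f (Suc k))) = n * (n - 1) div 2" by simp
qed


lemma jfrac_lim:
  "(\<lambda>N. jfrac g (\<lambda>m. u m * d (Suc m)) 0 N) \<longlonglongrightarrow> Abs_fps (\<lambda>n. Sw g u d 0 n)"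
proof (rule tendsto_fpsI)
  fix n
  show "\<forall>\<^sub>F N in sequentially. jfrac g (\<lambda>m. u m * d (Suc m)) 0 N $ n = Abs_fps (\<lambda>n. Sw g u d 0 n) $ n"
  proof (rule eventually_sequentiallyI)
    fix N assume "n \<le> N"
    have "jfrac g (\<lambda>m. u m * d (Suc m)) 0 N $ n
        = Sw (\<lambda>h. if h<N then g h else 0) (\<lambda>h. if h<N then u h else 0) d 0 n"
      using jfrac_coeff[where g=g and u=u and d=d and N=N and h=0 and n=n] by simp
    also have "\<dots> = Sw g u d 0 n" using \<open>n \<le> N\<close> by (intro Sw_trunc) simp
    finally show "jfrac g (\<lambda>m. u m * d (Suc m)) 0 N $ n = Abs_fps (\<lambda>n. Sw g u d 0 n) $ n" by simp
  qed
qed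

definition gq :: "complex \<Rightarrow> nat \<Rightarrow> complex" where
  "gq x = (\<lambda>m. (poly (qbinom (m+1) 1) x)^2)"
definition uq :: "complex \<Rightarrow> nat \<Rightarrow> complex" where
  "uq x = (\<lambda>m. x * poly (qbinom (m+2) 2) x)"
definition dq :: "complex \<Rightarrow> nat \<Rightarrow> complex" where
  "dq x = (\<lambda>m. poly (qbinom (m+1) 2) x)"

lemma poly_swp: "poly (swp a b) x = sw (gq x) (uq x) (dq x) a b"
  by (simp add: swp_def sw_def gq_def uq_def dq_def)

lemma term_zero:
  assumes "f \<in> ftuples n" "f \<notin> Apaths n 0"
  shows "(\<Prod>k<n. stp (f k) (f (Suc k))) = 0"
proof -
  obtain k where "k < n" "\<not> (f (Suc k) \<le> Suc (f k) \<and> f k \<le> Suc (f (Suc k)))"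
    using not_Apaths[OF assms] by blast
  then show ?thesis by (intro prod_zero) (auto intro!: bexI[of _ k] stp_zero)
qed

lemma term_degree:
  assumes "f \<in> Apaths n 0"
  shows "degree (monom 1 (nat (hexp n f)) * (\<Prod>k<n. stp (f k) (f (Suc k)))) \<le> n * (n - 1) div 2"
proof -
  have "degree (monom 1 (nat (hexp n f)) * (\<Prod>k<n. stp (f k) (f (Suc k))))
      \<le> degree (monom (1::complex) (nat (hexp n f))) + degree (\<Prod>k<n. stp (f k) (f (Suc k)))"
    by (rule degree_mult_le)
  also have "\<dots> \<le> nat (hexp n f) + (\<Sum>k<n. ex (f k) (f (Suc k)))"
  proof (rule add_mono)
    show "degree (monom (1::complex) (nat (hexp n f))) \<le> nat (hexp n f)" by (rule degree_monom_le)
    have "degree (\<Prod>k<n. stp (f k) (f (Suc k))) \<le> (\<Sum>k<n. degree (stp (f k) (f (Suc k))))"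
      using degree_prod_sum_le[of "{..<n}" "\<lambda>k. stp (f k) (f (Suc k))"] by (simp add: o_def)
    also have "\<dots> \<le> (\<Sum>k<n. ex (f k) (f (Suc k)))" by (intro sum_mono degree_stp')
    finally show "degree (\<Prod>k<n. stp (f k) (f (Suc k))) \<le> (\<Sum>k<n. ex (f k) (f (Suc k)))" .
  qed
  also have "\<dots> = n * (n - 1) div 2" by (rule hexp_Apaths(2)[OF assms])
  finally show ?thesis .
qed

lemma term_eval:
  assumes "f \<in> Apaths n 0" "x \<noteq> 0" "x \<noteq> -1"
  shows "x ^ (n * (n - 1) div 2) * poly (monom 1 (nat (hexp n f)) * (\<Prod>k<n. stp (f k) (f (Suc k)))) (inverse x)
       = poly (\<Prod>k<n. swp (f k) (f (Suc k))) x"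
proof -
  have st: "\<And>k. k < n \<Longrightarrow> f (Suc k) \<le> Suc (f k) \<and> f k \<le> Suc (f (Suc k))"
    using assms(1) by (auto simp: Apaths_def)
  define e where "e = nat (hexp n f)"
  have D: "x ^ (n * (n - 1) div 2) = x ^ e * (\<Prod>k<n. x ^ ex (f k) (f (Suc k)))"
    unfolding hexp_Apaths(2)[OF assms(1), symmetric] e_def by (simp add: power_add power_sum)
  have "x ^ (n * (n - 1) div 2) * poly (monom 1 (nat (hexp n f)) * (\<Prod>k<n. stp (f k) (f (Suc k)))) (inverse x)
      = (x ^ e * inverse x ^ e) * (\<Prod>k<n. x ^ ex (f k) (f (Suc k)) * poly (stp (f k) (f (Suc k))) (inverse x))"
    unfolding D e_def[symmetric] by (simp add: poly_monom poly_prod prod.distrib mult_ac)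
  also have "\<dots> = (\<Prod>k<n. poly (swp (f k) (f (Suc k))) x)"
    using assms(2) st stp_refl[OF _ _ assms(2,3)]
    by (simp add: power_mult_distrib[symmetric])
  also have "\<dots> = poly (\<Prod>k<n. swp (f k) (f (Suc k))) x" by (simp add: poly_prod)
  finally show ?thesis .
qed

lemma hpoly_term:
  assumes "f \<in> ftuples n"
  shows "monom 1 (nat (hexp n f)) * (\<Prod>k=1..n-1. qbinom (1 + f (k-1)) (f k) * qbinom (1 + f (k+1)) (f k))
       = monom 1 (nat (hexp n f)) * (\<Prod>k<n. stp (f k) (f (Suc k)))"
  using prod_reindex[OF ftuples_basic(1,2)[OF assms]] by simp

lemma degree_hpoly: "degree (hpoly n) \<le> n * (n - 1) div 2"
  unfolding hpoly_def
proof (rule degree_sum_le[OF finite_ftuples])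
  fix f assume f: "f \<in> ftuples n"
  show "degree (monom 1 (nat (hexp n f)) * (\<Prod>k=1..n-1. qbinom (1 + f (k-1)) (f k) * qbinom (1 + f (k+1)) (f k)))
      \<le> n * (n - 1) div 2"
  proof (cases "f \<in> Apaths n 0")
    case True then show ?thesis unfolding hpoly_term[OF f] by (rule term_degree)
  next
    case False then show ?thesis unfolding hpoly_term[OF f] term_zero[OF f False] by simp
  qed
qed

lemma htpoly_eq: "htpoly n = (\<Sum>f\<in>Apaths n 0. \<Prod>k<n. swp (f k) (f (Suc k)))"
proof (rule poly_eq_on_infinite)
  fix x :: complex assume x: "x \<noteq> 0" "x \<noteq> -1"
  let ?D = "n * (n - 1) div 2"
  let ?T = "\<lambda>f. monom 1 (nat (hexp n f)) * (\<Prod>k<n. stp (f k) (f (Suc k)))"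
  have "poly (htpoly n) x = x ^ ?D * poly (hpoly n) (inverse x)"
    unfolding htpoly_def by (rule poly_refl[OF degree_hpoly x(1)])
  also have "\<dots> = (\<Sum>f\<in>ftuples n. x ^ ?D * poly (?T f) (inverse x))"
  proof -
    have "hpoly n = (\<Sum>f\<in>ftuples n. ?T f)"
      unfolding hpoly_def by (rule sum.cong[OF refl]) (rule hpoly_term)
    then show ?thesis by (simp add: poly_sum sum_distrib_left)
  qed
  also have "\<dots> = (\<Sum>f\<in>Apaths n 0. x ^ ?D * poly (?T f) (inverse x))"
    by (rule sum.mono_neutral_right[OF finite_ftuples Apaths_ftuples]) (auto simp: term_zero)
  also have "\<dots> = (\<Sum>f\<in>Apaths n 0. poly (\<Prod>k<n. swp (f k) (f (Suc k))) x)"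
    by (rule sum.cong[OF refl]) (rule term_eval[OF _ x])
  also have "\<dots> = poly (\<Sum>f\<in>Apaths n 0. \<Prod>k<n. swp (f k) (f (Suc k))) x"
    by (simp add: poly_sum)
  finally show "poly (htpoly n) x = poly (\<Sum>f\<in>Apaths n 0. \<Prod>k<n. swp (f k) (f (Suc k))) x" .
qed

lemma poly_htpoly: "poly (htpoly n) q = Sw (gq q) (uq q) (dq q) 0 n"
proof -
  have "poly (htpoly n) q = (\<Sum>f\<in>Apaths n 0. \<Prod>k<n. sw (gq q) (uq q) (dq q) (f k) (f (Suc k)))"
    unfolding htpoly_eq by (simp add: poly_sum poly_prod poly_swp)
  also have "\<dots> = Sw (gq q) (uq q) (dq q) 0 n" by (rule path_sum)
  finally show ?thesis .
qed

theorem theorem3p2: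
  fixes q :: complex
  shows "(\<lambda>N. jfrac (\<lambda>m. (poly (qbinom (m+1) 1) q)^2)
                     (\<lambda>m. q * (poly (qbinom (m+2) 2) q)^2) 0 N)
           \<longlonglongrightarrow> Abs_fps (\<lambda>n. poly (htpoly n) q)"
proof -
  have g: "(\<lambda>m. (poly (qbinom (m+1) 1) q)^2) = gq q" by (simp add: gq_def)
  have l: "(\<lambda>m. q * (poly (qbinom (m+2) 2) q)^2) = (\<lambda>m. uq q m * dq q (Suc m))"
    by (simp add: uq_def dq_def power2_eq_square fun_eq_iff)
  have h: "(\<lambda>n. poly (htpoly n) q) = (\<lambda>n. Sw (gq q) (uq q) (dq q) 0 n)"
    by (simp add: poly_htpoly)
  show ?thesis unfolding g l h by (rule jfrac_lim)
qed

end
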